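(* Let $G$ be a connected undirected weighted graph on $n$ nodes (weights normalized as below) with maximum weighted degree $d_{\max}<\frac{n^{1/5}}{16\ln n}$. Then, for all sufficiently large $n$, $\mathsf{OPT}(G)>\frac{1}{8\,d_{\max}}$.
   Context: Weighted modularity: $G=(V,E,\ell)$ is an undirected graph with nonnegative edge weights $\ell$; $a_{u,v}=\ell(u,v)$ if $\{u,v\}\in E$ and $0$ otherwise; $d_u=\sum_{v}a_{u,v}$ is the weighted degree, $d_{\max}=\max_v d_v$. Weights are normalized (by a common scaling, which does not change modularity) so that $\sum_{v\in V}d_v=2|E|$, and $m=\frac12\sum_v d_v$. For $C\subseteq V$, $\mathsf M(C)=\frac{1}{2m}\sum_{u\in C}\sum_{v\in C}\big(a_{u,v}-\frac{d_ud_v}{2m}\big)$, the sum over all ordered pairs including $u=v$. A clustering is a partition $\mathcal S$ of $V$ into nonempty clusters, $\mathsf M(\mathcal S)=\sum_{C\in\mathcal S}\mathsf M(C)$, and $\mathsf{OPT}(G)$ is the maximum of $\mathsf M(\mathcal S)$ over all clusterings. *)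

theory Defs
  imports Complex_Main "HOL-Library.Disjoint_Sets"
begin

definition wgraph :: "'a set \<Rightarrow> 'a set set \<Rightarrow> ('a set \<Rightarrow> real) \<Rightarrow> bool" where
  "wgraph V E ell \<longleftrightarrow> finite V \<and>
     (\<forall>e\<in>E. \<exists>u v. u \<in> V \<and> v \<in> V \<and> u \<noteq> v \<and> e = {u, v}) \<and>
     (\<forall>e\<in>E. ell e \<ge> 0)"

definition connected_graph :: "'a set \<Rightarrow> 'a set set \<Rightarrow> bool" where
  "connected_graph V E \<longleftrightarrow>
     (\<forall>u\<in>V. \<forall>v\<in>V. (u, v) \<in> {(x, y). {x, y} \<in> E}\<^sup>*)"

definition adj :: "'a set set \<Rightarrow> ('a set \<Rightarrow> real) \<Rightarrow> 'a \<Rightarrow> 'a \<Rightarrow> real" where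
  "adj E ell u v = (if {u, v} \<in> E then ell {u, v} else 0)"

definition wdeg :: "'a set \<Rightarrow> 'a set set \<Rightarrow> ('a set \<Rightarrow> real) \<Rightarrow> 'a \<Rightarrow> real" where
  "wdeg V E ell u = (\<Sum>v\<in>V. adj E ell u v)"

definition dmax :: "'a set \<Rightarrow> 'a set set \<Rightarrow> ('a set \<Rightarrow> real) \<Rightarrow> real" where
  "dmax V E ell = Max (wdeg V E ell ` V)"

definition normalized :: "'a set \<Rightarrow> 'a set set \<Rightarrow> ('a set \<Rightarrow> real) \<Rightarrow> bool" where
  "normalized V E ell \<longleftrightarrow> (\<Sum>v\<in>V. wdeg V E ell v) = 2 * real (card E)"

definition mtot :: "'a set \<Rightarrow> 'a set set \<Rightarrow> ('a set \<Rightarrow> real) \<Rightarrow> real" where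
  "mtot V E ell = (\<Sum>v\<in>V. wdeg V E ell v) / 2"

definition modC :: "'a set \<Rightarrow> 'a set set \<Rightarrow> ('a set \<Rightarrow> real) \<Rightarrow> 'a set \<Rightarrow> real" where
  "modC V E ell C = 1 / (2 * mtot V E ell) *
     (\<Sum>u\<in>C. \<Sum>v\<in>C. adj E ell u v -
        wdeg V E ell u * wdeg V E ell v / (2 * mtot V E ell))"

definition modularity :: "'a set \<Rightarrow> 'a set set \<Rightarrow> ('a set \<Rightarrow> real) \<Rightarrow> 'a set set \<Rightarrow> real" where
  "modularity V E ell S = (\<Sum>C\<in>S. modC V E ell C)"

definition OPT :: "'a set \<Rightarrow> 'a set set \<Rightarrow> ('a set \<Rightarrow> real) \<Rightarrow> real" where
  "OPT V E ell = Max {modularity V E ell S | S. partition_on V S}"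

end

theory Submission
  imports Defs
begin

lemma edgeD: "wgraph V E ell \<Longrightarrow> e\<in>E \<Longrightarrow> \<exists>u v. u\<in>V \<and> v\<in>V \<and> u\<noteq>v \<and> e={u,v}"
  unfolding wgraph_def by blast

lemma finE: "wgraph V E ell \<Longrightarrow> finite E"
proof -
  assume w: "wgraph V E ell"
  have "E \<subseteq> Pow V" using edgeD[OF w] by blast
  moreover have "finite V" using w by (simp add: wgraph_def)
  ultimately show ?thesis by (meson finite_Pow_iff rev_finite_subset)
qed

lemma ell_nonneg: "wgraph V E ell \<Longrightarrow> e\<in>E \<Longrightarrow> ell e \<ge> 0"
  unfolding wgraph_def by blast

lemma adj_nonneg: "wgraph V E ell \<Longrightarrow> adj E ell u v \<ge> 0"
  unfolding adj_def using ell_nonneg by auto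

lemma adj_self: "wgraph V E ell \<Longrightarrow> adj E ell u u = 0"
proof -
  assume w: "wgraph V E ell"
  have "{u,u} \<notin> E"
  proof
    assume "{u,u} \<in> E"
    then obtain a b where "a \<noteq> b" "{u,u} = {a,b}" using edgeD[OF w] by blast
    then show False by (metis doubleton_eq_iff)
  qed
  then show ?thesis by (simp add: adj_def)
qed

lemma deg_edges:
  assumes w: "wgraph V E ell" and u: "u \<in> V"
  shows "wdeg V E ell u = (\<Sum>e\<in>{e\<in>E. u\<in>e}. ell e)"
proof -
  have fV: "finite V" using w by (simp add: wgraph_def)
  have "wdeg V E ell u = (\<Sum>v\<in>{v\<in>V. {u,v}\<in>E}. ell {u,v})"
    unfolding wdeg_def adj_def using fV by (simp add: sum.inter_filter)
  also have "\<dots> = (\<Sum>e\<in>(\<lambda>v. {u,v}) ` {v\<in>V. {u,v}\<in>E}. ell e)"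
    by (rule sum.reindex[symmetric, unfolded comp_def]) (auto simp: inj_on_def doubleton_eq_iff)
  also have "(\<lambda>v. {u,v}) ` {v\<in>V. {u,v}\<in>E} = {e\<in>E. u\<in>e}"
  proof
    show "{e\<in>E. u\<in>e} \<subseteq> (\<lambda>v. {u,v}) ` {v\<in>V. {u,v}\<in>E}"
    proof
      fix e assume e: "e \<in> {e\<in>E. u\<in>e}"
      then obtain a b where ab: "a\<in>V" "b\<in>V" "e={a,b}" using edgeD[OF w] by blast
      show "e \<in> (\<lambda>v. {u,v}) ` {v\<in>V. {u,v}\<in>E}"
      proof (cases "u = a")
        case True then show ?thesis using e ab by auto
      next
        case False then have "u = b" using e ab by auto
        then show ?thesis using e ab by (auto intro!: image_eqI[of _ _ a] simp: insert_commute)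
      qed
    qed
  qed auto
  finally show ?thesis .
qed

lemma handshake:
  assumes w: "wgraph V E ell"
  shows "(\<Sum>v\<in>V. wdeg V E ell v) = 2 * (\<Sum>e\<in>E. ell e)"
proof -
  have fV: "finite V" using w by (simp add: wgraph_def)
  have fE: "finite E" using finE[OF w] .
  have "(\<Sum>v\<in>V. wdeg V E ell v) = (\<Sum>v\<in>V. \<Sum>e\<in>E. if v \<in> e then ell e else 0)"
    using deg_edges[OF w] fE by (simp add: sum.inter_filter)
  also have "\<dots> = (\<Sum>e\<in>E. \<Sum>v\<in>V. if v \<in> e then ell e else 0)"
    by (rule sum.swap)
  also have "\<dots> = (\<Sum>e\<in>E. 2 * ell e)"
  proof (rule sum.cong[OF refl])
    fix e assume e: "e \<in> E"
    then obtain a b where ab: "a\<in>V" "b\<in>V" "a\<noteq>b" "e={a,b}" using edgeD[OF w] by blast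
    have "V \<inter> e = {a,b}" using ab by auto
    then have c: "card (V \<inter> e) = 2" using ab by simp
    have "(\<Sum>v\<in>V. if v \<in> e then ell e else 0) = real (card (V \<inter> e)) * ell e"
      using fV by (simp add: sum.If_cases Int_def)
    then show "(\<Sum>v\<in>V. if v \<in> e then ell e else 0) = 2 * ell e" using c by simp
  qed
  finally show ?thesis by (simp add: sum_distrib_left)
qed

lemma matching:
  assumes w: "wgraph V E ell" and D: "\<forall>u\<in>V. wdeg V E ell u \<le> D"
  shows "finite F \<Longrightarrow> F \<subseteq> E \<Longrightarrow> \<exists>M\<subseteq>F. (\<forall>e\<in>M. \<forall>f\<in>M. e\<noteq>f \<longrightarrow> e\<inter>f={}) \<and>
     (\<Sum>e\<in>F. (ell e)^2) \<le> 2*D*(\<Sum>e\<in>M. ell e)"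
proof (induction F rule: finite_psubset_induct)
  case (psubset F)
  show ?case
  proof (cases "F = {}")
    case True then show ?thesis by auto
  next
    case False
    have "Max (ell ` F) \<in> ell ` F" using False psubset.hyps by simp
    then obtain f where f: "f \<in> F" "ell f = Max (ell ` F)" by auto
    have fmax: "\<forall>e\<in>F. ell e \<le> ell f" using f psubset.hyps by simp
    have fE: "f \<in> E" using f psubset.prems by auto
    obtain a b where ab: "a\<in>V" "b\<in>V" "a\<noteq>b" "f={a,b}" using edgeD[OF w fE] by blast
    define F' where "F' = {e\<in>F. e\<inter>f={}}"
    have sub: "F' \<subseteq> F" unfolding F'_def by auto
    have fnot: "f \<notin> F'" unfolding F'_def using ab by auto
    have psub: "F' \<subset> F" using sub fnot f by auto
    obtain M' where M': "M' \<subseteq> F'" "\<forall>e\<in>M'. \<forall>g\<in>M'. e\<noteq>g \<longrightarrow> e\<inter>g={}"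
      "(\<Sum>e\<in>F'. (ell e)^2) \<le> 2*D*(\<Sum>e\<in>M'. ell e)"
      using psubset.IH[OF psub] psub psubset.prems by blast
    have fin: "finite F" using psubset.hyps .
    have finE': "finite E" using finE[OF w] .
    have nn: "\<And>e. e \<in> F \<Longrightarrow> ell e \<ge> 0" using ell_nonneg[OF w] psubset.prems by auto
    have split: "(\<Sum>e\<in>F. (ell e)^2) = (\<Sum>e\<in>F-F'. (ell e)^2) + (\<Sum>e\<in>F'. (ell e)^2)"
      using sum.subset_diff[OF sub fin] .
    have s1: "(\<Sum>e\<in>F-F'. (ell e)^2) \<le> (\<Sum>e\<in>F-F'. ell f * ell e)"
    proof (rule sum_mono)
      fix e assume "e \<in> F - F'"
      then have "e \<in> F" by auto
      then show "(ell e)^2 \<le> ell f * ell e" using fmax nn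
        by (simp add: power2_eq_square mult_right_mono)
    qed
    have s2: "(\<Sum>e\<in>F-F'. ell e) \<le> (\<Sum>e\<in>{e\<in>E. a\<in>e} \<union> {e\<in>E. b\<in>e}. ell e)"
    proof (rule sum_mono2)
      show "finite ({e\<in>E. a\<in>e} \<union> {e\<in>E. b\<in>e})" using finE' by auto
      show "F - F' \<subseteq> {e\<in>E. a\<in>e} \<union> {e\<in>E. b\<in>e}" using psubset.prems ab unfolding F'_def by auto
      show "\<And>e. e \<in> {e\<in>E. a\<in>e} \<union> {e\<in>E. b\<in>e} - (F - F') \<Longrightarrow> 0 \<le> ell e"
        using ell_nonneg[OF w] by auto
    qed
    have s3: "(\<Sum>e\<in>{e\<in>E. a\<in>e} \<union> {e\<in>E. b\<in>e}. ell e) \<le>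
         (\<Sum>e\<in>{e\<in>E. a\<in>e}. ell e) + (\<Sum>e\<in>{e\<in>E. b\<in>e}. ell e)"
    proof -
      have "(\<Sum>e\<in>{e\<in>E. a\<in>e} \<union> {e\<in>E. b\<in>e}. ell e) + (\<Sum>e\<in>{e\<in>E. a\<in>e} \<inter> {e\<in>E. b\<in>e}. ell e)
          = (\<Sum>e\<in>{e\<in>E. a\<in>e}. ell e) + (\<Sum>e\<in>{e\<in>E. b\<in>e}. ell e)"
        by (rule sum.union_inter) (use finE' in auto)
      moreover have "(\<Sum>e\<in>{e\<in>E. a\<in>e} \<inter> {e\<in>E. b\<in>e}. ell e) \<ge> 0"
        using ell_nonneg[OF w] by (auto intro: sum_nonneg)
      ultimately show ?thesis by linarith
    qed
    have s4: "(\<Sum>e\<in>{e\<in>E. a\<in>e}. ell e) + (\<Sum>e\<in>{e\<in>E. b\<in>e}. ell e) \<le> 2*D"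
    proof -
      have "wdeg V E ell a \<le> D" "wdeg V E ell b \<le> D" using D ab by auto
      then show ?thesis using deg_edges[OF w ab(1)] deg_edges[OF w ab(2)] by linarith
    qed
    have "(\<Sum>e\<in>F-F'. ell f * ell e) = ell f * (\<Sum>e\<in>F-F'. ell e)" by (simp add: sum_distrib_left)
    also have "\<dots> \<le> ell f * (2*D)"
      using s2 s3 s4 nn[OF f(1)] by (intro mult_left_mono) auto
    finally have s5: "(\<Sum>e\<in>F-F'. (ell e)^2) \<le> 2*D*ell f" using s1 by (simp add: algebra_simps)
    have fM: "f \<notin> M'" using M'(1) fnot by auto
    have finM: "finite M'" using M'(1) sub fin by (meson finite_subset)
    have "(\<Sum>e\<in>insert f M'. ell e) = ell f + (\<Sum>e\<in>M'. ell e)" using fM finM by simp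
    then have bound: "(\<Sum>e\<in>F. (ell e)^2) \<le> 2*D*(\<Sum>e\<in>insert f M'. ell e)"
      using split s5 M'(3) by (simp add: algebra_simps)
    have disj: "\<forall>e\<in>insert f M'. \<forall>g\<in>insert f M'. e\<noteq>g \<longrightarrow> e\<inter>g={}"
      using M'(1,2) unfolding F'_def by blast
    have "insert f M' \<subseteq> F" using f M'(1) sub by auto
    then show ?thesis using disj bound by blast
  qed
qed

lemma pair_A:
  assumes w: "wgraph V E ell" and e: "e \<in> E"
  shows "(\<Sum>x\<in>e. \<Sum>y\<in>e. adj E ell x y) = 2 * ell e"
proof -
  obtain a b where ab: "a\<in>V" "b\<in>V" "a\<noteq>b" "e={a,b}" using edgeD[OF w e] by blast
  have "adj E ell a b = ell e" "adj E ell b a = ell e" using e ab by (auto simp: adj_def insert_commute)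
  then show ?thesis using ab adj_self[OF w] by simp
qed

lemma main_bound:
  assumes w: "wgraph V E ell" and c: "connected_graph V E" and nz: "normalized V E ell"
    and n3: "card V \<ge> 3"
    and dm: "dmax V E ell < real (card V) powr (1/5) / (16 * ln (real (card V)))"
  shows "OPT V E ell > 1 / (8 * dmax V E ell)"
proof -
  define n where "n = card V"
  define K where "K = real (card E)"
  define Dm where "Dm = dmax V E ell"
  define d where "d = wdeg V E ell"
  have fV: "finite V" using w by (simp add: wgraph_def)
  have fE: "finite E" using finE[OF w] .
  have sumd: "(\<Sum>v\<in>V. d v) = 2*K" using nz unfolding normalized_def d_def K_def .
  have mt: "mtot V E ell = K" using sumd unfolding mtot_def d_def by simp
  have sumw: "(\<Sum>e\<in>E. ell e) = K" using handshake[OF w] sumd unfolding d_def by simp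
  have Vne: "V \<noteq> {}" using n3 by auto
  have dle: "\<And>u. u \<in> V \<Longrightarrow> d u \<le> Dm" unfolding Dm_def dmax_def d_def using fV by simp
  have dnn: "\<And>u. d u \<ge> 0" unfolding d_def wdeg_def using adj_nonneg[OF w] by (simp add: sum_nonneg)
  have cover: "V \<subseteq> \<Union>E"
  proof
    fix u assume u: "u \<in> V"
    have "card (V - {u}) \<ge> 2" using n3 u fV by simp
    then have "V - {u} \<noteq> {}" by (intro notI) simp
    then obtain v where v: "v \<in> V" "v \<noteq> u" by blast
    have "(u, v) \<in> {(x, y). {x, y} \<in> E}\<^sup>*" using c u v unfolding connected_graph_def by blast
    then show "u \<in> \<Union>E"
    proof (cases rule: converse_rtranclE)
      case base then show ?thesis using v by simp
    next
      case (step y) then show ?thesis by auto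
    qed
  qed
  have finU: "finite (\<Union>E)"
  proof (rule finite_Union[OF fE])
    fix e assume "e \<in> E"
    then obtain a b where "e={a,b}" using edgeD[OF w] by blast
    then show "finite e" by simp
  qed
  have "card V \<le> card (\<Union>E)" using cover finU by (rule card_mono[rotated])
  also have "\<dots> \<le> sum card E" by (rule card_Union_le_sum_card)
  also have "sum card E = sum (\<lambda>e. 2) E"
  proof (rule sum.cong[OF refl])
    fix e assume "e \<in> E"
    then obtain a b where "a\<noteq>b" "e={a,b}" using edgeD[OF w] by blast
    then show "card e = 2" by simp
  qed
  finally have nK: "real n \<le> 2*K" unfolding n_def K_def by simp
  have n_pos: "real n \<ge> 3" using n3 unfolding n_def by simp
  have Kpos: "K > 0" using nK n_pos by simp
  have "2*K \<le> (\<Sum>v\<in>V. Dm)" unfolding sumd[symmetric] by (rule sum_mono) (simp add: dle)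
  then have "2*K \<le> real n * Dm" unfolding n_def by simp
  then have nD: "2*K \<le> real n * Dm" .
  have Dpos: "Dm > 0"
  proof (rule ccontr)
    assume "\<not> Dm > 0"
    then have "real n * Dm \<le> 0" using n_pos by (simp add: mult_nonneg_nonpos)
    then show False using Kpos nD by linarith
  qed
  have ln1: "ln (real n) \<ge> 1"
  proof -
    have "exp 1 \<le> real n" using exp_le n_pos by linarith
    then show ?thesis using ln_ge_iff[of "real n" 1] n_pos by simp
  qed
  have p5: "real n powr (1/5) > 0" using n_pos by simp
  have "Dm < real n powr (1/5) / (16 * ln (real n))" using dm unfolding Dm_def n_def .
  also have "\<dots> \<le> real n powr (1/5) / 16" by (intro divide_left_mono) (use ln1 p5 n_pos in auto)
  finally have D16: "Dm < real n powr (1/5) / 16" .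
  have "Dm^2 < (real n powr (1/5) / 16)^2" using D16 Dpos by (simp add: power_strict_mono)
  also have "\<dots> = real n powr (2/5) / 256"
    using n_pos by (simp add: power2_eq_square powr_add[symmetric] power_divide)
  also have "real n powr (2/5) \<le> real n powr 1" using n_pos by (intro powr_mono) auto
  finally have D2: "Dm^2 < real n / 256" using n_pos by simp
  have Dall: "\<forall>u\<in>V. wdeg V E ell u \<le> Dm" using dle unfolding d_def by blast
  obtain M where M: "M \<subseteq> E" "\<forall>e\<in>M. \<forall>f\<in>M. e\<noteq>f \<longrightarrow> e\<inter>f={}"
    "(\<Sum>e\<in>E. (ell e)^2) \<le> 2*Dm*(\<Sum>e\<in>M. ell e)"
    using matching[OF w Dall fE] by blast
  define W where "W = (\<Sum>e\<in>M. ell e)"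
  have "0 \<le> (\<Sum>e\<in>E. (ell e - 1)^2)" by (simp add: sum_nonneg)
  also have "\<dots> = (\<Sum>e\<in>E. (ell e)^2) - 2*(\<Sum>e\<in>E. ell e) + K"
    unfolding K_def by (simp add: power2_diff sum.distrib sum_subtractf sum_distrib_left)
  finally have sq: "(\<Sum>e\<in>E. (ell e)^2) \<ge> K" using sumw by simp
  have WK: "2*Dm*W \<ge> K" using sq M(3) unfolding W_def by simp
  define S where "S = M \<union> (\<lambda>v. {v}) ` (V - \<Union>M)"
  have MV: "\<And>e. e \<in> M \<Longrightarrow> e \<subseteq> V \<and> card e = 2 \<and> e \<noteq> {}"
  proof -
    fix e assume "e \<in> M"
    then obtain a b where "a\<in>V" "b\<in>V" "a\<noteq>b" "e={a,b}" using edgeD[OF w] M(1) by blast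
    then show "e \<subseteq> V \<and> card e = 2 \<and> e \<noteq> {}" by auto
  qed
  have UnS: "\<Union>S = V" unfolding S_def using MV by auto
  have disjS: "\<forall>A\<in>S. \<forall>B\<in>S. A \<noteq> B \<longrightarrow> A \<inter> B = {}"
    unfolding S_def using M(2) by auto
  have part: "partition_on V S"
  proof (rule partition_onI)
    show "\<Union>S = V" by (rule UnS)
    show "\<And>p q. p \<in> S \<Longrightarrow> q \<in> S \<Longrightarrow> p \<noteq> q \<Longrightarrow> disjnt p q"
      using disjS by (auto simp: disjnt_def)
    show "{} \<notin> S" unfolding S_def using MV by blast
  qed
  have finS: "finite S" using finite_elements[OF fV part] .
  have cardS: "\<And>C. C \<in> S \<Longrightarrow> card C \<le> 2 \<and> C \<subseteq> V"
    unfolding S_def using MV by auto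
  define A where "A C = (\<Sum>x\<in>C. \<Sum>y\<in>C. adj E ell x y)" for C
  define Dc where "Dc C = (\<Sum>x\<in>C. d x)" for C
  have modC_eq: "modC V E ell C = (A C - (Dc C)^2/(2*K)) / (2*K)" for C
  proof -
    have "(\<Sum>u\<in>C. \<Sum>v\<in>C. adj E ell u v - d u * d v / (2*K)) = A C - (Dc C)^2/(2*K)"
      unfolding A_def Dc_def
      by (simp add: sum_subtractf power2_eq_square sum_divide_distrib[symmetric] sum_product)
    then show ?thesis unfolding modC_def mt d_def by simp
  qed
  have "modularity V E ell S = (\<Sum>C\<in>S. (A C - (Dc C)^2/(2*K)) / (2*K))"
    unfolding modularity_def modC_eq ..
  also have "\<dots> = ((\<Sum>C\<in>S. A C) - (\<Sum>C\<in>S. (Dc C)^2)/(2*K)) / (2*K)"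
    by (simp add: sum_divide_distrib[symmetric] sum_subtractf)
  finally have modS: "modularity V E ell S = ((\<Sum>C\<in>S. A C) - (\<Sum>C\<in>S. (Dc C)^2)/(2*K)) / (2*K)" .
  have Ann: "A C \<ge> 0" for C unfolding A_def using adj_nonneg[OF w] by (simp add: sum_nonneg)
  have "(\<Sum>C\<in>M. A C) \<le> (\<Sum>C\<in>S. A C)"
    by (rule sum_mono2[OF finS]) (auto simp: S_def Ann)
  moreover have "(\<Sum>C\<in>M. A C) = 2*W"
    unfolding W_def sum_distrib_left A_def using pair_A[OF w] M(1) by (auto intro: sum.cong)
  ultimately have SA: "(\<Sum>C\<in>S. A C) \<ge> 2*W" by simp
  have Dcb: "(Dc C)^2 \<le> 2*Dm*Dc C" if C: "C \<in> S" for C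
  proof -
    have "Dc C \<le> real (card C) * Dm" unfolding Dc_def
      using cardS[OF C] dle by (intro sum_bounded_above) auto
    also have "\<dots> \<le> 2 * Dm" using cardS[OF C] Dpos by (intro mult_right_mono) auto
    finally have "Dc C \<le> 2*Dm" .
    moreover have "Dc C \<ge> 0" unfolding Dc_def using dnn by (simp add: sum_nonneg)
    ultimately show ?thesis by (simp add: power2_eq_square mult_right_mono)
  qed
  have "(\<Sum>C\<in>S. (Dc C)^2) \<le> (\<Sum>C\<in>S. 2*Dm*Dc C)" using Dcb by (rule sum_mono)
  also have "\<dots> = 2*Dm*(\<Sum>C\<in>S. Dc C)" by (simp add: sum_distrib_left)
  also have "(\<Sum>C\<in>S. Dc C) = (\<Sum>v\<in>V. d v)"
  proof -
    have "(\<Sum>v\<in>\<Union>S. d v) = (\<Sum>C\<in>S. Dc C)"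
      unfolding Dc_def using sum.Union_disjoint[OF _ disjS, of d] cardS fV
      by (simp add: comp_def) (meson finite_subset)
    then show ?thesis using UnS by simp
  qed
  finally have SD: "(\<Sum>C\<in>S. (Dc C)^2) \<le> 4*Dm*K" using sumd by simp
  have "modularity V E ell S \<ge> (2*W - 2*Dm) / (2*K)"
  proof -
    have "(\<Sum>C\<in>S. (Dc C)^2)/(2*K) \<le> 2*Dm" using SD Kpos by (simp add: divide_le_eq)
    then have "(\<Sum>C\<in>S. A C) - (\<Sum>C\<in>S. (Dc C)^2)/(2*K) \<ge> 2*W - 2*Dm" using SA by linarith
    then show ?thesis unfolding modS using Kpos by (simp add: divide_right_mono)
  qed
  moreover have "(2*W - 2*Dm) / (2*K) > 1/(8*Dm)"
  proof -
    have "W \<ge> K/(2*Dm)" using WK Dpos by (simp add: divide_le_eq mult.commute)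
    have "8*Dm^2 < 3*K" using D2 nK by linarith
    have eq2: "(2*W - 2*Dm) / (2*K) = (W - Dm)/K"
      by (metis (no_types) mult_divide_mult_cancel_left_if right_diff_distrib zero_neq_numeral)
    have key: "8*Dm*(W - Dm) > K"
    proof -
      have "8*Dm*W \<ge> 4*K" using WK by linarith
      then show ?thesis using \<open>8*Dm^2 < 3*K\<close> by (simp add: power2_eq_square algebra_simps)
    qed
    then have "(W - Dm)/K > 1/(8*Dm)" using Kpos Dpos
      by (simp add: field_simps)
    then show ?thesis using eq2 by simp
  qed
  moreover have "OPT V E ell \<ge> modularity V E ell S"
    unfolding OPT_def
    by (rule Max_ge) (use finitely_many_partition_on[OF fV] part in auto)
  ultimately show ?thesis unfolding Dm_def by linarith
qed

theorem lemma11: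
  shows "\<exists>N::nat. \<forall>(V::nat set) E ell.
     wgraph V E ell \<and> connected_graph V E \<and> normalized V E ell \<and>
     card V \<ge> N \<and>
     dmax V E ell < real (card V) powr (1/5) / (16 * ln (real (card V)))
     \<longrightarrow> OPT V E ell > 1 / (8 * dmax V E ell)"
  using main_bound by (intro exI[of _ 3]) blast

end
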